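(* Let $\mathcal{F}$ be a $\mathbb{Z}$-graded (super)manifold, $k$ an integer, $\omega$ a symplectic form on $\mathcal{F}$ with $\mathrm{gh}(\omega)=k-1$, $\mathcal{S}$ a function with $\mathrm{gh}(\mathcal{S})=k$, $\mathcal{Q}$ a vector field with $\mathrm{gh}(\mathcal{Q})=1$, and $\mathcal{T}$ a function with $\mathrm{gh}(\mathcal{T})=k+1$ such that $\frac12\iota_{[\mathcal{Q},\mathcal{Q}]}\omega=-\delta\mathcal{T}$. Set $\underline{\alpha}:=\iota_\mathcal{Q}\omega-\delta\mathcal{S}$, $\underline{\omega}:=\delta\underline{\alpha}$, and $\ker\underline{\omega}:=\{Y\in\mathfrak{X}(\mathcal{F})\mid \iota_Y\underline{\omega}=0\}$. Then $\mathcal{Q}$ is projectable with respect to the foliation defined by $\ker\underline{\omega}$: for every $Y\in\ker\underline{\omega}$ one has $[\mathcal{Q},Y]\in\ker\underline{\omega}$.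
   Context: $\delta$ is the de Rham differential on $\mathcal{F}$, $\mathrm{gh}$ the ghost number, $[\cdot,\cdot]$ the graded commutator of vector fields. Conventions: $L_\mathcal{Q}=\iota_\mathcal{Q}\delta-\delta\iota_\mathcal{Q}$ on forms, $L_\mathcal{Q}L_\mathcal{Q}=\frac12 L_{[\mathcal{Q},\mathcal{Q}]}$, and $[L_X,\iota_Y]=\iota_{[X,Y]}$ (graded commutators). $\mathcal{Q}$ is not assumed cohomological. *)

theory Defs
  imports "HOL-Analysis.Analysis"
begin

text \<open>Abstract model of the Cartan calculus on a Z-graded (super)manifold F.
  'w : differential forms on F (all form degrees; functions are the 0-forms),
  'v : vector fields on F.
  d     : de Rham differential delta,
  iota  : contraction,
  br    : graded commutator of vector fields,
  vgh X p : X is homogeneous of ghost number p,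
  fgh a n : the form a is homogeneous of ghost number n,
  fdeg a m: the form a has form degree m.\<close>

definition lie :: "('v \<Rightarrow> 'w \<Rightarrow> 'w::real_vector) \<Rightarrow> ('w \<Rightarrow> 'w) \<Rightarrow> 'v \<Rightarrow> 'w \<Rightarrow> 'w" where
  "lie iota d X a = iota X (d a) - d (iota X a)"

definition graded_sign :: "int \<Rightarrow> real" where
  "graded_sign n = (if even n then 1 else -1)"

definition cartan_calculus ::
  "('w::real_vector \<Rightarrow> 'w) \<Rightarrow> ('v::real_vector \<Rightarrow> 'w \<Rightarrow> 'w) \<Rightarrow> ('v \<Rightarrow> 'v \<Rightarrow> 'v)
   \<Rightarrow> ('v \<Rightarrow> int \<Rightarrow> bool) \<Rightarrow> ('w \<Rightarrow> int \<Rightarrow> bool) \<Rightarrow> ('w \<Rightarrow> nat \<Rightarrow> bool) \<Rightarrow> bool" where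
  "cartan_calculus d iota br vgh fgh fdeg \<longleftrightarrow>
     linear d \<and> (\<forall>X. linear (iota X)) \<and> (\<forall>a. linear (\<lambda>X. iota X a))
   \<and> (\<forall>X. linear (br X)) \<and> (\<forall>Y. linear (\<lambda>X. br X Y))
   \<and> (\<forall>a. d (d a) = 0)
   \<comment> \<open>ghost grading of vector fields\<close>
   \<and> (\<forall>p. vgh 0 p)
   \<and> (\<forall>X Y p. vgh X p \<and> vgh Y p \<longrightarrow> vgh (X + Y) p)
   \<and> (\<forall>X c p. vgh X p \<longrightarrow> vgh (c *\<^sub>R X) p)
   \<and> (\<forall>Y. \<exists>(F::int set) c. finite F \<and> (\<forall>n\<in>F. vgh (c n) n) \<and> Y = (\<Sum>n\<in>F. c n))
   \<and> (\<forall>X Y p q. vgh X p \<and> vgh Y q \<longrightarrow> vgh (br X Y) (p + q))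
   \<comment> \<open>ghost grading of forms\<close>
   \<and> (\<forall>n. fgh 0 n)
   \<and> (\<forall>a b n. fgh a n \<and> fgh b n \<longrightarrow> fgh (a + b) n)
   \<and> (\<forall>a c n. fgh a n \<longrightarrow> fgh (c *\<^sub>R a) n)
   \<and> (\<forall>(F::int set) c. finite F \<and> (\<forall>n\<in>F. fgh (c n) n) \<and> (\<Sum>n\<in>F. c n) = 0
          \<longrightarrow> (\<forall>n\<in>F. c n = 0))
   \<and> (\<forall>a n. fgh a n \<longrightarrow> fgh (d a) n)
   \<and> (\<forall>X a p n. vgh X p \<and> fgh a n \<longrightarrow> fgh (iota X a) (n + p))
   \<comment> \<open>form degree\<close>
   \<and> (\<forall>m. fdeg 0 m)
   \<and> (\<forall>a b m. fdeg a m \<and> fdeg b m \<longrightarrow> fdeg (a + b) m)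
   \<and> (\<forall>a c m. fdeg a m \<longrightarrow> fdeg (c *\<^sub>R a) m)
   \<and> (\<forall>a m. fdeg a m \<longrightarrow> fdeg (d a) (Suc m))
   \<and> (\<forall>X a m. fdeg a (Suc m) \<longrightarrow> fdeg (iota X a) m)
   \<and> (\<forall>X a. fdeg a 0 \<longrightarrow> iota X a = 0)
   \<comment> \<open>Cartan identities for odd vector fields (where L_X = iota_X d - d iota_X)\<close>
   \<and> (\<forall>X p a. vgh X p \<and> odd p \<longrightarrow>
          lie iota d X (lie iota d X a) = (1/2) *\<^sub>R lie iota d (br X X) a)
   \<and> (\<forall>X Y p q a. vgh X p \<and> odd p \<and> vgh Y q \<longrightarrow>
          iota (br X Y) a = lie iota d X (iota Y a)
                            - graded_sign (p * (q - 1)) *\<^sub>R iota Y (lie iota d X a))"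

definition symplectic ::
  "('w::real_vector \<Rightarrow> 'w) \<Rightarrow> ('v::real_vector \<Rightarrow> 'w \<Rightarrow> 'w) \<Rightarrow> ('w \<Rightarrow> nat \<Rightarrow> bool) \<Rightarrow> 'w \<Rightarrow> bool" where
  "symplectic d iota fdeg \<omega> \<longleftrightarrow> fdeg \<omega> 2 \<and> d \<omega> = 0 \<and> (\<forall>Y. iota Y \<omega> = 0 \<longrightarrow> Y = 0)"

definition kernel_of :: "('v \<Rightarrow> 'w \<Rightarrow> 'w::zero) \<Rightarrow> 'w \<Rightarrow> 'v set" where
  "kernel_of iota \<eta> = {Y. iota Y \<eta> = 0}"

end

theory Submission
  imports Defs
begin

theorem mainTheorem11:
  fixes d :: "'w::real_vector \<Rightarrow> 'w" and iota :: "'v::real_vector \<Rightarrow> 'w \<Rightarrow> 'w"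
    and br :: "'v \<Rightarrow> 'v \<Rightarrow> 'v" and vgh :: "'v \<Rightarrow> int \<Rightarrow> bool"
    and fgh :: "'w \<Rightarrow> int \<Rightarrow> bool" and fdeg :: "'w \<Rightarrow> nat \<Rightarrow> bool"
    and k :: int and \<omega> S T :: 'w and Q :: 'v
  assumes calc: "cartan_calculus d iota br vgh fgh fdeg"
    and symp: "symplectic d iota fdeg \<omega>" and gh_omega: "fgh \<omega> (k - 1)"
    and S_fun: "fdeg S 0" and gh_S: "fgh S k"
    and gh_Q: "vgh Q 1"
    and T_fun: "fdeg T 0" and gh_T: "fgh T (k + 1)"
    and QQ: "(1/2) *\<^sub>R iota (br Q Q) \<omega> = - d T"
  shows "\<forall>Y \<in> kernel_of iota (d (iota Q \<omega> - d S)).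
           br Q Y \<in> kernel_of iota (d (iota Q \<omega> - d S))"
proof -
  note C = calc[unfolded cartan_calculus_def]
  have ld: "linear d" using C by (elim conjE) simp
  have li: "\<And>X. linear (iota X)" using C by (elim conjE) simp
  have lix: "\<And>a. linear (\<lambda>X. iota X a)" using C by (elim conjE) simp
  have lbr: "linear (br Q)" using C by (elim conjE) simp
  have dd: "\<And>a. d (d a) = 0" using C by (elim conjE) simp
  have cart: "\<And>Y q a. vgh Y q \<Longrightarrow> iota (br Q Y) a = lie iota d Q (iota Y a)
        - graded_sign (1 * (q - 1)) *\<^sub>R iota Y (lie iota d Q a)"
    using C gh_Q by (elim conjE) (meson odd_one)
  have dw: "d \<omega> = 0" using symp unfolding symplectic_def by blast
  define a where "a = iota Q \<omega>"
  define b where "b = iota Q a"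
  have d0: "d 0 = 0" using ld linear_0 by blast
  have i0: "\<And>X. iota X 0 = 0" using li linear_0 by blast
  have dminus: "\<And>x y. d (x - y) = d x - d y" using ld linear_diff by blast
  have dplus: "\<And>x y. d (x + y) = d x + d y" using ld linear_add by blast
  have dscale: "\<And>c x. d (c *\<^sub>R x) = c *\<^sub>R d x" using ld linear_scale by blast
  have dneg: "\<And>x. d (- x) = - d x" using ld linear_neg by blast
  have ineg: "\<And>X x. iota X (- x) = - iota X x" using li linear_neg by blast
  have iplus: "\<And>X x y. iota X (x + y) = iota X x + iota X y" using li linear_add by blast
  have "iota (br Q Q) \<omega> = lie iota d Q (iota Q \<omega>)
        - graded_sign (1 * (1 - 1)) *\<^sub>R iota Q (lie iota d Q \<omega>)"
    using cart[OF gh_Q] .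
  also have "\<dots> = (iota Q (d a) - d b) + iota Q (d a)"
    unfolding lie_def graded_sign_def a_def b_def using dw i0 ineg by simp
  finally have e1: "iota (br Q Q) \<omega> = 2 *\<^sub>R iota Q (d a) - d b"
    by (simp add: scaleR_2 algebra_simps)
  have e2: "iota Q (d a) = - d T + (1/2) *\<^sub>R d b"
  proof -
    have "(1/2) *\<^sub>R (2 *\<^sub>R iota Q (d a) - d b) = - d T" using QQ e1 by simp
    thus ?thesis by (simp add: algebra_simps)
  qed
  define w where "w = d (iota Q \<omega> - d S)"
  have w_eq: "w = d a" unfolding w_def a_def using dminus dd by simp
  have Lw: "lie iota d Q w = 0"
  proof -
    have "lie iota d Q w = iota Q (d (d a)) - d (iota Q (d a))"
      unfolding lie_def w_eq ..
    also have "\<dots> = - d (- d T + (1/2) *\<^sub>R d b)" by (simp only: dd i0 e2) simp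
    also have "\<dots> = 0" by (simp only: dplus dneg dscale dd) simp
    finally show ?thesis .
  qed
  have hom: "iota (br Q Z) w = lie iota d Q (iota Z w)" if "vgh Z q" for Z q
    using cart[OF that, of w] Lw i0 by simp
  have llie: "linear (lie iota d Q)"
  proof -
    have A: "linear (\<lambda>x. iota Q (d x))" using linear_compose[OF ld li[of Q]] by (simp add: o_def)
    have B: "linear (\<lambda>x. d (iota Q x))" using linear_compose[OF li[of Q] ld] by (simp add: o_def)
    show ?thesis unfolding lie_def[abs_def] using linear_compose_sub[OF A B] by simp
  qed
  show ?thesis
  proof
    fix Y assume "Y \<in> kernel_of iota (d (iota Q \<omega> - d S))"
    hence Yk: "iota Y w = 0" unfolding kernel_of_def w_def by simp
    obtain F :: "int set" and c where F: "finite F" "\<forall>n\<in>F. vgh (c n) n" "Y = (\<Sum>n\<in>F. c n)"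
      using C by (elim conjE) meson
    have l1: "linear (\<lambda>X. iota (br Q X) w)"
      using linear_compose[OF lbr lix[of w]] by (simp add: o_def)
    have l2: "linear (\<lambda>X. lie iota d Q (iota X w))"
      using linear_compose[OF lix[of w] llie] by (simp add: o_def)
    have "iota (br Q Y) w = (\<Sum>n\<in>F. iota (br Q (c n)) w)"
      using F(3) linear_sum[OF l1] by simp
    also have "\<dots> = (\<Sum>n\<in>F. lie iota d Q (iota (c n) w))"
      using F(2) hom by (intro sum.cong) auto
    also have "\<dots> = lie iota d Q (iota Y w)"
      unfolding F(3) using linear_sum[OF l2, of c F] by (rule sym)
    also have "\<dots> = 0" using Yk llie linear_0 by simp
    finally show "br Q Y \<in> kernel_of iota (d (iota Q \<omega> - d S))"
      unfolding kernel_of_def w_def by simp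
  qed
qed

end
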